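(* Let $\Theta$ be a finite simple oriented graph with simple cycles $C_1,\ldots,C_k$ ($k\geq1$) that does not contain two different cycles connected by an oriented path, and let $\Theta'$ be its maximal cycle-reachable subgraph. For every vertex $x\in V(\Theta')\setminus(V(C_1)\cup\cdots\cup V(C_k))$, either all oriented paths between $x$ and any cycle lead from $x$ into cycles, or all lead from cycles into $x$. Let $k_x$ be the number of oriented paths of non-negative length in $\Theta$ ending at $x$ in the first case, and the number of oriented paths of non-negative length in $\Theta$ beginning at $x$ in the second case. Then, for any deg-lex order on the free monoid on $V(\Theta)$, in every reduced word of $\mathrm{HK}_\Theta$ the letter $x$ occurs at most $k_x$ times.
   Context: $\mathrm{HK}_\Theta$ is the Hecke--Kiselman monoid of $\Theta$: generated by the vertices $x$, with $x^2=x$; $xy=yx$ if $x,y$ are not joined by an edge; $xyx=yxy=xy$ if $x\to y$. The maximal cycle-reachable subgraph $\Theta'$ is the full subgraph of $\Theta$ on all vertices lying on a cycle together with all vertices connected to at least one cycle by an oriented path (in either direction). A path of length $0$ at $x$ counts as exactly one path starting and ending at $x$. For a word $w$ and vertex $t$: $w\nrightarrow t$ means $t$ does not occur in $w$ and no letter $x$ of $w$ has $x\to t$; $t\nrightarrow w$ means $t$ does not occur in $w$ and no letter $y$ of $w$ has $t\to y$; $t\nleftrightarrow w$ means both. Given a deg-lex order on words (induced by a total order on vertices), a word is reduced if it has no factor of the form $twt$ with $w\nrightarrow t$, no factor $twt$ with $t\nrightarrow w$, and no factor $t_1wt_2$ with $t_1>t_2$ and $t_2\nleftrightarrow t_1w$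 (here $t,t_1,t_2$ are vertices, $w$ a word). *)

theory Defs
  imports Main
begin

definition simple_oriented_graph :: "'a set \<Rightarrow> ('a \<Rightarrow> 'a \<Rightarrow> bool) \<Rightarrow> bool" where
  "simple_oriented_graph V E \<longleftrightarrow> finite V \<and>
     (\<forall>x y. E x y \<longrightarrow> x \<in> V \<and> y \<in> V) \<and>
     (\<forall>x. \<not> E x x) \<and> (\<forall>x y. E x y \<longrightarrow> \<not> E y x)"

text \<open>Oriented path (vertices pairwise distinct), of length length p - 1 >= 0.\<close>
definition is_path :: "'a set \<Rightarrow> ('a \<Rightarrow> 'a \<Rightarrow> bool) \<Rightarrow> 'a list \<Rightarrow> bool" where
  "is_path V E p \<longleftrightarrow> p \<noteq> [] \<and> set p \<subseteq> V \<and> distinct p \<and>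
     (\<forall>i. Suc i < length p \<longrightarrow> E (p ! i) (p ! Suc i))"

definition is_cycle :: "'a set \<Rightarrow> ('a \<Rightarrow> 'a \<Rightarrow> bool) \<Rightarrow> 'a list \<Rightarrow> bool" where
  "is_cycle V E c \<longleftrightarrow> length c \<ge> 2 \<and> distinct c \<and> set c \<subseteq> V \<and>
     (\<forall>i < length c. E (c ! i) (c ! ((Suc i) mod length c)))"

text \<open>A cycle as a subgraph is determined by its set of arrows (independent of rotation).\<close>
definition cycle_edges :: "'a list \<Rightarrow> ('a \<times> 'a) set" where
  "cycle_edges c = {(c ! i, c ! ((Suc i) mod length c)) | i. i < length c}"

definition cycle_vertices :: "'a set \<Rightarrow> ('a \<Rightarrow> 'a \<Rightarrow> bool) \<Rightarrow> 'a set" where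
  "cycle_vertices V E = \<Union>{set c | c. is_cycle V E c}"

definition no_connected_cycles :: "'a set \<Rightarrow> ('a \<Rightarrow> 'a \<Rightarrow> bool) \<Rightarrow> bool" where
  "no_connected_cycles V E \<longleftrightarrow>
     (\<forall>c d. is_cycle V E c \<and> is_cycle V E d \<and> cycle_edges c \<noteq> cycle_edges d \<longrightarrow>
        \<not> (\<exists>p. is_path V E p \<and> hd p \<in> set c \<and> last p \<in> set d))"

definition cycle_reachable_vertices :: "'a set \<Rightarrow> ('a \<Rightarrow> 'a \<Rightarrow> bool) \<Rightarrow> 'a set" where
  "cycle_reachable_vertices V E = cycle_vertices V E \<union>
     {x. \<exists>p. is_path V E p \<and>
          ((hd p = x \<and> last p \<in> cycle_vertices V E) \<or> (hd p \<in> cycle_vertices V E \<and> last p = x))}"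

definition leads_into_cycles :: "'a set \<Rightarrow> ('a \<Rightarrow> 'a \<Rightarrow> bool) \<Rightarrow> 'a \<Rightarrow> bool" where
  "leads_into_cycles V E x \<longleftrightarrow>
     (\<forall>p. is_path V E p \<and> ((hd p = x \<and> last p \<in> cycle_vertices V E) \<or>
                            (hd p \<in> cycle_vertices V E \<and> last p = x))
        \<longrightarrow> hd p = x \<and> last p \<in> cycle_vertices V E)"

definition leads_from_cycles :: "'a set \<Rightarrow> ('a \<Rightarrow> 'a \<Rightarrow> bool) \<Rightarrow> 'a \<Rightarrow> bool" where
  "leads_from_cycles V E x \<longleftrightarrow>
     (\<forall>p. is_path V E p \<and> ((hd p = x \<and> last p \<in> cycle_vertices V E) \<or>
                            (hd p \<in> cycle_vertices V E \<and> last p = x))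
        \<longrightarrow> hd p \<in> cycle_vertices V E \<and> last p = x)"

definition not_to :: "('a \<Rightarrow> 'a \<Rightarrow> bool) \<Rightarrow> 'a list \<Rightarrow> 'a \<Rightarrow> bool" where
  "not_to E w t \<longleftrightarrow> t \<notin> set w \<and> (\<forall>y \<in> set w. \<not> E y t)"

definition not_from :: "('a \<Rightarrow> 'a \<Rightarrow> bool) \<Rightarrow> 'a \<Rightarrow> 'a list \<Rightarrow> bool" where
  "not_from E t w \<longleftrightarrow> t \<notin> set w \<and> (\<forall>y \<in> set w. \<not> E t y)"

definition not_conn :: "('a \<Rightarrow> 'a \<Rightarrow> bool) \<Rightarrow> 'a \<Rightarrow> 'a list \<Rightarrow> bool" where
  "not_conn E t w \<longleftrightarrow> not_to E w t \<and> not_from E t w"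

text \<open>Reduced words with respect to the deg-lex order induced by the strict total
  order ord on the vertices ((a,b) \<in> ord means a < b).\<close>
definition reduced :: "('a \<Rightarrow> 'a \<Rightarrow> bool) \<Rightarrow> 'a rel \<Rightarrow> 'a list \<Rightarrow> bool" where
  "reduced E ord u \<longleftrightarrow>
     \<not> (\<exists>a t w b. u = a @ [t] @ w @ [t] @ b \<and> not_to E w t) \<and>
     \<not> (\<exists>a t w b. u = a @ [t] @ w @ [t] @ b \<and> not_from E t w) \<and>
     \<not> (\<exists>a t1 w t2 b. u = a @ [t1] @ w @ [t2] @ b \<and> (t2, t1) \<in> ord \<and>
          not_conn E t2 (t1 # w))"

end

theory Submission
  imports Defs
begin

lemma path_reach:
  assumes "is_path V E p" "i \<le> j" "j < length p"
  shows "E\<^sup>*\<^sup>* (p ! i) (p ! j)"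
  using assms
proof (induction j)
  case 0 then show ?case by simp
next
  case (Suc j)
  show ?case
  proof (cases "i = Suc j")
    case True then show ?thesis by simp
  next
    case False
    then have "E\<^sup>*\<^sup>* (p ! i) (p ! j)" using Suc by simp
    moreover have "E (p ! j) (p ! Suc j)" using Suc.prems unfolding is_path_def by blast
    ultimately show ?thesis by (rule rtranclp.rtrancl_into_rtrancl)
  qed
qed

lemma path_reach_last:
  assumes "is_path V E p" "i < length p"
  shows "E\<^sup>*\<^sup>* (p ! i) (last p)"
proof -
  have "p \<noteq> []" using assms unfolding is_path_def by auto
  then have "last p = p ! (length p - 1)" by (simp add: last_conv_nth)
  then show ?thesis using path_reach[OF assms(1), of i "length p - 1"] assms by simp
qed

lemma path_append:
  assumes "is_path V E p" "E (last p) v" "v \<in> V" "v \<notin> set p"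
  shows "is_path V E (p @ [v])"
proof -
  have ne: "p \<noteq> []" using assms unfolding is_path_def by auto
  have "E ((p @ [v]) ! i) ((p @ [v]) ! Suc i)" if "Suc i < length (p @ [v])" for i
  proof (cases "Suc i < length p")
    case True
    then show ?thesis using assms(1) unfolding is_path_def by (simp add: nth_append)
  next
    case False
    then have "i = length p - 1" using that by simp
    then show ?thesis using ne assms(2) by (simp add: nth_append last_conv_nth)
  qed
  then show ?thesis using assms unfolding is_path_def by auto
qed

lemma path_take:
  assumes "is_path V E p" "i < length p"
  shows "is_path V E (take (Suc i) p)" "hd (take (Suc i) p) = hd p" "last (take (Suc i) p) = p ! i"
proof -
  show "is_path V E (take (Suc i) p)"
    using assms unfolding is_path_def
    by (auto dest: in_set_takeD)
  show "hd (take (Suc i) p) = hd p" using assms unfolding is_path_def by simp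
  have "take (Suc i) p \<noteq> []" using assms by (cases p) auto
  then show "last (take (Suc i) p) = p ! i" using assms by (auto simp: last_conv_nth min_def intro: arg_cong[where f="(!) p"])
qed

lemma walk_to_path:
  assumes "E\<^sup>*\<^sup>* a b" "a \<in> V" "\<forall>x y. E x y \<longrightarrow> x \<in> V \<and> y \<in> V"
  shows "\<exists>p. is_path V E p \<and> hd p = a \<and> last p = b"
  using assms(1)
proof (induction rule: rtranclp_induct)
  case base
  then show ?case using assms(2) by (intro exI[of _ "[a]"]) (simp add: is_path_def)
next
  case (step y z)
  then obtain p where p: "is_path V E p" "hd p = a" "last p = y" by blast
  show ?case
  proof (cases "z \<in> set p")
    case True
    then obtain i where i: "i < length p" "p ! i = z" by (auto simp: in_set_conv_nth)
    then show ?thesis using path_take[OF p(1) i(1)] p by metis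
  next
    case False
    have "is_path V E (p @ [z])" using path_append[OF p(1)] step assms(3) p False by auto
    moreover have "hd (p @ [z]) = a" using p unfolding is_path_def by simp
    ultimately show ?thesis by (intro exI[of _ "p @ [z]"]) simp
  qed
qed

lemma path_cycle:
  assumes "is_path V E p" "length p \<ge> 2" "E (last p) (hd p)"
  shows "is_cycle V E p"
proof -
  have ne: "p \<noteq> []" using assms unfolding is_path_def by auto
  have "E (p ! i) (p ! (Suc i mod length p))" if "i < length p" for i
  proof (cases "Suc i < length p")
    case True
    then show ?thesis using assms(1) unfolding is_path_def by simp
  next
    case False
    then have "i = length p - 1" using that by simp
    then show ?thesis using ne assms(3) by (simp add: last_conv_nth hd_conv_nth)
  qed
  then show ?thesis using assms unfolding is_path_def is_cycle_def by auto
qed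

lemma trancl_cycle:
  assumes "E\<^sup>+\<^sup>+ v v" "\<forall>x y. E x y \<longrightarrow> x \<in> V \<and> y \<in> V" "\<forall>x. \<not> E x x"
  shows "v \<in> cycle_vertices V E"
proof -
  obtain y where y: "E v y" "E\<^sup>*\<^sup>* y v" using assms(1) tranclpD by metis
  then obtain p where p: "is_path V E p" "hd p = y" "last p = v"
    using walk_to_path[OF y(2) _ assms(2)] assms(2) by blast
  have "y \<noteq> v" using y assms(3) by auto
  then have "length p \<ge> 2" using p
    by (cases p; cases "tl p") (auto simp: is_path_def)
  then have "is_cycle V E p" using path_cycle[OF p(1)] p y by simp
  moreover have "v \<in> set p" using p unfolding is_path_def by auto
  ultimately show ?thesis unfolding cycle_vertices_def by blast
qed


lemma gap:
  assumes nobad: "\<not> (\<exists>a t w b. u = a @ [t] @ w @ [t] @ b \<and> not_to E w t)"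
    and irr: "\<not> E t t"
  shows "count_list u t \<le> Suc (length (filter (\<lambda>y. E y t) u))"
  using nobad
proof (induction u rule: length_induct)
  case (1 u)
  show ?case
  proof (cases "t \<in> set u")
    case False
    then show ?thesis by (simp add: count_list_0_iff)
  next
    case True
    then obtain w b where u: "u = w @ t # b" "t \<notin> set w" by (metis split_list_first)
    show ?thesis
    proof (cases "t \<in> set b")
      case False
      then show ?thesis using u by (simp add: count_list_0_iff)
    next
      case True
      then obtain w2 b2 where b: "b = w2 @ t # b2" "t \<notin> set w2" by (metis split_list_first)
      have "\<not> not_to E w2 t" using "1.prems" u b by force
      then obtain y where y: "y \<in> set w2" "E y t" using b unfolding not_to_def by auto
      then have f1: "length (filter (\<lambda>y. E y t) w2) \<ge> 1"
        by (metis One_nat_def Suc_leI filter_empty_conv length_greater_0_conv)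
      have nb: "\<not> (\<exists>a s w b. t # b2 = a @ [s] @ w @ [s] @ b \<and> not_to E w s)"
      proof
        assume "\<exists>a t' w b. t # b2 = a @ [t'] @ w @ [t'] @ b \<and> not_to E w t'"
        then obtain a t' w' b' where "t # b2 = a @ [t'] @ w' @ [t'] @ b'" "not_to E w' t'" by blast
        then have "u = (w @ t # w2 @ a) @ [t'] @ w' @ [t'] @ b' \<and> not_to E w' t'" using u b by simp
        then show False using "1.prems" by blast
      qed
      have "length (t # b2) < length u" using u b by simp
      then have ih: "count_list (t # b2) t \<le> Suc (length (filter (\<lambda>y. E y t) (t # b2)))"
        using "1.IH" nb by blast
      have "count_list u t = Suc (count_list (t # b2) t)" using u b by (simp add: count_list_0_iff)
      also have "\<dots> \<le> Suc (Suc (length (filter (\<lambda>y. E y t) b2)))" using ih irr by simp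
      also have "\<dots> \<le> Suc (length (filter (\<lambda>y. E y t) u))" using u b f1 irr by simp
      finally show ?thesis .
    qed
  qed
qed

lemma filter_sum:
  assumes "finite N"
  shows "length (filter (\<lambda>y. y \<in> N) u) = (\<Sum>y\<in>N. count_list u y)"
proof (induction u)
  case Nil then show ?case by simp
next
  case (Cons a u)
  have "(\<Sum>y\<in>N. count_list (a # u) y) = (\<Sum>y\<in>N. count_list u y + (if a = y then 1 else 0))"
    by (intro sum.cong) auto
  also have "\<dots> = (\<Sum>y\<in>N. count_list u y) + (if a \<in> N then 1 else 0)"
    using assms by (simp add: sum.distrib)
  finally show ?case using Cons by simp
qed

lemma finite_paths:
  assumes "finite V"
  shows "finite {p. is_path V E p \<and> P p}"
proof -
  have "{p. is_path V E p \<and> P p} \<subseteq> {xs. set xs \<subseteq> V \<and> length xs \<le> card V}"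
    using assms unfolding is_path_def by (auto simp: card_mono distinct_card[symmetric])
  then show ?thesis using finite_lists_length_le[OF assms] finite_subset by blast
qed

lemma card_step:
  assumes fin: "finite V" and edges: "\<forall>a b. E a b \<longrightarrow> a \<in> V \<and> b \<in> V"
    and v: "v \<in> V" and nc: "\<not> E\<^sup>+\<^sup>+ v v"
  shows "Suc (\<Sum>y\<in>{y. E y v}. card {p. is_path V E p \<and> last p = y})
           \<le> card {p. is_path V E p \<and> last p = v}"
proof -
  define S where "S y = {p. is_path V E p \<and> last p = y}" for y
  define N where "N = {y. E y v}"
  have finN: "finite N" using edges fin unfolding N_def by (metis mem_Collect_eq rev_finite_subset subsetI)
  have finS: "finite (S y)" for y unfolding S_def by (rule finite_paths[OF fin])
  have sub: "insert [v] (\<Union>y\<in>N. (\<lambda>p. p @ [v]) ` S y) \<subseteq> S v"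
  proof -
    have "[v] \<in> S v" using v unfolding S_def is_path_def by simp
    moreover have "p @ [v] \<in> S v" if "y \<in> N" "p \<in> S y" for y p
    proof -
      have p: "is_path V E p" "last p = y" "E y v" using that unfolding S_def N_def by auto
      have "v \<notin> set p"
      proof
        assume "v \<in> set p"
        then obtain i where "i < length p" "p ! i = v" by (auto simp: in_set_conv_nth)
        then have "E\<^sup>*\<^sup>* v y" using path_reach_last[OF p(1)] p by metis
        then have "E\<^sup>+\<^sup>+ v v" using p(3) by (metis rtranclp_into_tranclp1)
        then show False using nc by simp
      qed
      then have "is_path V E (p @ [v])" using path_append[OF p(1)] p v by simp
      then show ?thesis unfolding S_def by simp
    qed
    ultimately show ?thesis by blast
  qed
  have "card (insert [v] (\<Union>y\<in>N. (\<lambda>p. p @ [v]) ` S y)) = Suc (card (\<Union>y\<in>N. (\<lambda>p. p @ [v]) ` S y))"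
  proof (rule card_insert_disjoint)
    show "finite (\<Union>y\<in>N. (\<lambda>p. p @ [v]) ` S y)" using finN finS by blast
    show "[v] \<notin> (\<Union>y\<in>N. (\<lambda>p. p @ [v]) ` S y)" unfolding S_def is_path_def by auto
  qed
  also have "card (\<Union>y\<in>N. (\<lambda>p. p @ [v]) ` S y) = (\<Sum>y\<in>N. card ((\<lambda>p. p @ [v]) ` S y))"
  proof (rule card_UN_disjoint[OF finN])
    show "\<forall>i\<in>N. finite ((\<lambda>p. p @ [v]) ` S i)" using finS by blast
    show "\<forall>i\<in>N. \<forall>j\<in>N. i \<noteq> j \<longrightarrow> (\<lambda>p. p @ [v]) ` S i \<inter> (\<lambda>p. p @ [v]) ` S j = {}"
      unfolding S_def by auto
  qed
  also have "(\<Sum>y\<in>N. card ((\<lambda>p. p @ [v]) ` S y)) = (\<Sum>y\<in>N. card (S y))"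
    by (intro sum.cong refl card_image) (simp add: inj_on_def)
  finally have "Suc (\<Sum>y\<in>N. card (S y)) \<le> card (S v)"
    using card_mono[OF finS sub] by simp
  then show ?thesis unfolding S_def N_def .
qed

lemma count_bound:
  assumes fin: "finite V" and edges: "\<forall>a b. E a b \<longrightarrow> a \<in> V \<and> b \<in> V"
    and irr: "\<forall>a. \<not> E a a"
    and closed: "\<forall>v. E\<^sup>+\<^sup>+ v v \<longrightarrow> v \<in> C"
    and nobad: "\<not> (\<exists>a t w b. u = a @ [t] @ w @ [t] @ b \<and> not_to E w t)"
  shows "v \<in> V \<Longrightarrow> \<not> (\<exists>c\<in>C. E\<^sup>*\<^sup>* c v) \<Longrightarrow>
     count_list u v \<le> card {p. is_path V E p \<and> last p = v}"
proof (induction "card {p. is_path V E p \<and> last p = v}" arbitrary: v rule: less_induct)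
  case less
  define k where "k y = card {p. is_path V E p \<and> last p = y}" for y
  define N where "N = {y. E y v}"
  have finN: "finite N" using edges fin unfolding N_def by (metis mem_Collect_eq rev_finite_subset subsetI)
  have nc: "\<not> E\<^sup>+\<^sup>+ v v" using closed less.prems by blast
  have cs: "Suc (\<Sum>y\<in>N. k y) \<le> k v" using card_step[OF fin edges less.prems(1) nc]
    unfolding k_def N_def .
  have "count_list u v \<le> Suc (length (filter (\<lambda>y. E y v) u))" using gap[OF nobad] irr by blast
  also have "filter (\<lambda>y. E y v) u = filter (\<lambda>y. y \<in> N) u" unfolding N_def by simp
  also have "length \<dots> = (\<Sum>y\<in>N. count_list u y)" by (rule filter_sum[OF finN])
  also have "(\<Sum>y\<in>N. count_list u y) \<le> (\<Sum>y\<in>N. k y)"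
  proof (rule sum_mono)
    fix y assume y: "y \<in> N"
    have "k y \<le> (\<Sum>y\<in>N. k y)" by (rule member_le_sum[OF y _ finN]) simp
    then have lt: "k y < k v" using cs by simp
    have yV: "y \<in> V" using y edges unfolding N_def by blast
    have "\<not> (\<exists>c\<in>C. E\<^sup>*\<^sup>* c y)" using less.prems(2) y unfolding N_def
      by (meson mem_Collect_eq rtranclp.rtrancl_into_rtrancl)
    then show "count_list u y \<le> k y" using less.hyps[of y] lt yV unfolding k_def by blast
  qed
  finally show ?case using cs unfolding k_def by simp
qed


lemma conv_trancl: "(\<lambda>a b. E b a)\<^sup>+\<^sup>+ a b \<Longrightarrow> E\<^sup>+\<^sup>+ b a"
  by (induction rule: tranclp_induct) (auto intro: tranclp_trans)

lemma conv_rtrancl: "(\<lambda>a b. E b a)\<^sup>*\<^sup>* a b \<Longrightarrow> E\<^sup>*\<^sup>* b a"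
  by (induction rule: rtranclp_induct) (auto intro: rtranclp_trans)

lemma rev_path:
  assumes "is_path V (\<lambda>a b. E b a) p"
  shows "is_path V E (rev p)"
proof -
  have "E (rev p ! i) (rev p ! Suc i)" if "Suc i < length p" for i
  proof -
    define j where "j = length p - Suc (Suc i)"
    have "Suc j < length p" "length p - Suc i = Suc j" "length p - Suc (Suc i) = j"
      using that unfolding j_def by auto
    then show ?thesis using assms that unfolding is_path_def by (simp add: rev_nth)
  qed
  then show ?thesis using assms unfolding is_path_def by auto
qed

lemma card_rev:
  "card {p. is_path V (\<lambda>a b. E b a) p \<and> last p = x} = card {p. is_path V E p \<and> hd p = x}"
proof -
  have "{p. is_path V (\<lambda>a b. E b a) p \<and> last p = x} = rev ` {p. is_path V E p \<and> hd p = x}"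
  proof (intro set_eqI iffI)
    fix p assume "p \<in> {p. is_path V (\<lambda>a b. E b a) p \<and> last p = x}"
    then have "is_path V E (rev p)" "hd (rev p) = x" using rev_path[of V E p]
      by (auto simp: hd_rev)
    then show "p \<in> rev ` {p. is_path V E p \<and> hd p = x}" by (intro image_eqI[of _ _ "rev p"]) auto
  next
    fix p assume "p \<in> rev ` {p. is_path V E p \<and> hd p = x}"
    then obtain q where q: "p = rev q" "is_path V E q" "hd q = x" by auto
    have "is_path V (\<lambda>a b. (\<lambda>a b. E b a) b a) q" using q by simp
    then have "is_path V (\<lambda>a b. E b a) (rev q)" by (rule rev_path)
    moreover have "q \<noteq> []" using q unfolding is_path_def by simp
    ultimately show "p \<in> {p. is_path V (\<lambda>a b. E b a) p \<and> last p = x}" using q by (simp add: last_rev)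
  qed
  then show ?thesis by (simp add: card_image)
qed

lemma cycle_reach:
  assumes "is_cycle V E c" "i < length c" "j < length c"
  shows "E\<^sup>*\<^sup>* (c ! i) (c ! j)"
proof -
  let ?n = "length c"
  have n: "?n > 0" by (rule le_less_trans[OF le0 assms(2)])
  have "E\<^sup>*\<^sup>* (c ! i) (c ! ((i + k) mod ?n))" for k
  proof (induction k)
    case 0 then show ?case using assms by simp
  next
    case (Suc k)
    have "E (c ! ((i + k) mod ?n)) (c ! (Suc ((i + k) mod ?n) mod ?n))"
      using assms(1) n unfolding is_cycle_def by simp
    moreover have "Suc ((i + k) mod ?n) mod ?n = (i + Suc k) mod ?n" by (simp add: mod_Suc_eq)
    ultimately show ?case using Suc by (metis rtranclp.rtrancl_into_rtrancl)
  qed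
  from this[of "j + ?n - i"] show ?thesis using assms by simp
qed

lemma cycle_edges_set: "fst ` cycle_edges c = set c"
  unfolding cycle_edges_def by (auto simp: in_set_conv_nth image_iff)

theorem lemma3p1:
  fixes V :: "'a set" and E :: "'a \<Rightarrow> 'a \<Rightarrow> bool" and x :: 'a
  assumes graph: "simple_oriented_graph V E"
    and has_cycle: "\<exists>c. is_cycle V E c"
    and no_conn: "no_connected_cycles V E"
    and x_in: "x \<in> cycle_reachable_vertices V E"
    and x_not_cycle: "x \<notin> cycle_vertices V E"
  shows "(leads_into_cycles V E x \<or> leads_from_cycles V E x) \<and>
    (\<forall>ord u. strict_linear_order_on V ord \<and> set u \<subseteq> V \<and> reduced E ord u \<longrightarrow>
       (leads_into_cycles V E x \<longrightarrow>
          count_list u x \<le> card {p. is_path V E p \<and> last p = x}) \<and>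
       (leads_from_cycles V E x \<longrightarrow>
          count_list u x \<le> card {p. is_path V E p \<and> hd p = x}))"
proof -
  let ?C = "cycle_vertices V E"
  have fin: "finite V" and edges: "\<forall>a b. E a b \<longrightarrow> a \<in> V \<and> b \<in> V" and irr: "\<forall>a. \<not> E a a"
    using graph unfolding simple_oriented_graph_def by auto
  have CV: "?C \<subseteq> V" unfolding cycle_vertices_def is_cycle_def by auto
  have xV: "x \<in> V"
  proof -
    obtain p where p: "is_path V E p" "hd p = x \<or> last p = x"
      using x_in x_not_cycle unfolding cycle_reachable_vertices_def by blast
    then have "p \<noteq> []" "set p \<subseteq> V" unfolding is_path_def by auto
    then show ?thesis using p(2) hd_in_set last_in_set by blast
  qed
  have closed: "\<forall>v. E\<^sup>+\<^sup>+ v v \<longrightarrow> v \<in> ?C" using trancl_cycle[OF _ edges irr] by blast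
  have part1: "leads_into_cycles V E x \<or> leads_from_cycles V E x"
  proof (rule ccontr)
    assume "\<not> ?thesis"
    then obtain p q where
      p: "is_path V E p" "(hd p = x \<and> last p \<in> ?C) \<or> (hd p \<in> ?C \<and> last p = x)"
         "\<not> (hd p = x \<and> last p \<in> ?C)" and
      q: "is_path V E q" "(hd q = x \<and> last q \<in> ?C) \<or> (hd q \<in> ?C \<and> last q = x)"
         "\<not> (hd q \<in> ?C \<and> last q = x)"
      unfolding leads_into_cycles_def leads_from_cycles_def by blast
    have p2: "hd p \<in> ?C" "last p = x" using p by auto
    have q2: "hd q = x" "last q \<in> ?C" using q by auto
    have r1: "E\<^sup>*\<^sup>* (hd p) x" using path_reach_last[OF p(1), of 0] p2 p(1)
      unfolding is_path_def by (simp add: hd_conv_nth)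
    have r2: "E\<^sup>*\<^sup>* x (last q)" using path_reach_last[OF q(1), of 0] q2 q(1)
      unfolding is_path_def by (simp add: hd_conv_nth)
    obtain c where c: "is_cycle V E c" "hd p \<in> set c" using p2 unfolding cycle_vertices_def by blast
    obtain d where d: "is_cycle V E d" "last q \<in> set d" using q2 unfolding cycle_vertices_def by blast
    have "E\<^sup>*\<^sup>* (hd p) (last q)" using r1 r2 by (rule rtranclp_trans)
    then obtain r where r: "is_path V E r" "hd r = hd p" "last r = last q"
      using walk_to_path[OF _ _ edges] p2 CV by blast
    have "cycle_edges c = cycle_edges d"
    proof (rule ccontr)
      assume "cycle_edges c \<noteq> cycle_edges d"
      then have "\<not> (\<exists>p. is_path V E p \<and> hd p \<in> set c \<and> last p \<in> set d)"
        using no_conn c(1) d(1) unfolding no_connected_cycles_def by blast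
      then show False using r c d by metis
    qed
    then have "set c = set d" using cycle_edges_set[of c] cycle_edges_set[of d] by simp
    then obtain i where i: "i < length c" "c ! i = last q"
    proof -
      have "last q \<in> set c" using d(2) \<open>set c = set d\<close> by simp
      then show ?thesis using that by (auto simp: in_set_conv_nth)
    qed
    obtain j where j: "j < length c" "c ! j = hd p"
      using c(2) by (auto simp: in_set_conv_nth)
    have r3: "E\<^sup>*\<^sup>* (last q) (hd p)" using cycle_reach[OF c(1) i(1) j(1)] i j by simp
    have "x \<noteq> last q" using q2 x_not_cycle by auto
    then have "E\<^sup>+\<^sup>+ x (last q)" using r2 by (metis rtranclpD)
    then have "E\<^sup>+\<^sup>+ x x" using tranclp_rtranclp_tranclp rtranclp_trans[OF r3 r1] by fast
    then show False using closed x_not_cycle by blast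
  qed
  have part2: "(leads_into_cycles V E x \<longrightarrow>
          count_list u x \<le> card {p. is_path V E p \<and> last p = x}) \<and>
       (leads_from_cycles V E x \<longrightarrow>
          count_list u x \<le> card {p. is_path V E p \<and> hd p = x})"
    if red: "reduced E ord u" for ord u
  proof (intro conjI impI)
    assume li: "leads_into_cycles V E x"
    have nobad: "\<not> (\<exists>a t w b. u = a @ [t] @ w @ [t] @ b \<and> not_to E w t)"
      using red unfolding reduced_def by blast
    have "\<not> (\<exists>c\<in>?C. E\<^sup>*\<^sup>* c x)"
    proof
      assume "\<exists>c\<in>?C. E\<^sup>*\<^sup>* c x"
      then obtain c where "c \<in> ?C" "E\<^sup>*\<^sup>* c x" by blast
      then obtain p where "is_path V E p" "hd p = c" "last p = x"
        using walk_to_path[OF _ _ edges] CV by blast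
      then show False using li x_not_cycle \<open>c \<in> ?C\<close> unfolding leads_into_cycles_def by blast
    qed
    then show "count_list u x \<le> card {p. is_path V E p \<and> last p = x}"
      using count_bound[OF fin edges irr closed nobad xV] by blast
  next
    assume lf: "leads_from_cycles V E x"
    let ?E = "\<lambda>a b. E b a"
    have nobad: "\<not> (\<exists>a t w b. u = a @ [t] @ w @ [t] @ b \<and> not_to ?E w t)"
    proof -
      have eq: "\<And>w t. not_to ?E w t \<longleftrightarrow> not_from E t w" unfolding not_to_def not_from_def by simp
      show ?thesis using red unfolding reduced_def eq by blast
    qed
    have edges': "\<forall>a b. ?E a b \<longrightarrow> a \<in> V \<and> b \<in> V" using edges by blast
    have irr': "\<forall>a. \<not> ?E a a" using irr by blast
    have closed': "\<forall>v. ?E\<^sup>+\<^sup>+ v v \<longrightarrow> v \<in> ?C" using closed conv_trancl[of E] by blast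
    have "\<not> (\<exists>c\<in>?C. ?E\<^sup>*\<^sup>* c x)"
    proof
      assume "\<exists>c\<in>?C. ?E\<^sup>*\<^sup>* c x"
      then obtain c where "c \<in> ?C" "?E\<^sup>*\<^sup>* c x" by blast
      moreover from this(2) have "E\<^sup>*\<^sup>* x c" by (rule conv_rtrancl)
      ultimately have "c \<in> ?C" "E\<^sup>*\<^sup>* x c" by blast+
      then obtain p where "is_path V E p" "hd p = x" "last p = c"
        using walk_to_path[OF _ xV edges] by blast
      then show False using lf x_not_cycle \<open>c \<in> ?C\<close> unfolding leads_from_cycles_def by blast
    qed
    then have "count_list u x \<le> card {p. is_path V ?E p \<and> last p = x}"
      using count_bound[OF fin edges' irr' closed' nobad xV] by blast
    then show "count_list u x \<le> card {p. is_path V E p \<and> hd p = x}"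
      using card_rev[of V E x] by simp
  qed
  show ?thesis using part1 part2 by blast
qed

end
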